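(* Let $V$ be a vector space of countably infinite dimension over a field $\mathbb{F}$ and $u$ an endomorphism of $V$. Assume that $V^u=V_1\oplus V_2$ (direct sum of submodules), where $V_1$ is a non-zero free monogenous $\mathbb{F}[t]$-module and $u$ induces a scalar multiple of the identity on $V_2$. Let $x$ be a generator of $V_1$ and $a\in\mathbb{F}$. Then there exists an endomorphism $v$ of $V$ such that $v^2=av$ and, setting $u':=u-v$, one has $V=\operatorname{Span}\bigl((u')^k(x)\bigr)_{k\in\mathbb{N}}$.
   Context: $V^u$ is the $\mathbb{F}[t]$-module with underlying space $V$ and $t\cdot x:=u(x)$; a module is monogenous if it is generated by one element. *)

theory Defs
  imports Complex_Main "HOL-Library.Countable_Set"
begin

definition orbit_span :: "('f::field \<Rightarrow> 'v::ab_group_add \<Rightarrow> 'v) \<Rightarrow> ('v \<Rightarrow> 'v) \<Rightarrow> 'v \<Rightarrow> 'v set" where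
  "orbit_span scale u x = module.span scale (range (\<lambda>k. (u ^^ k) x))"

text \<open>W is a free monogenous F[t]-submodule of V^u: there is y with W = F[t] y and
  p(u) y = 0 only for p = 0, i.e. the vectors u^k y (k in N) are pairwise distinct and
  linearly independent.\<close>
definition free_monogenous :: "('f::field \<Rightarrow> 'v::ab_group_add \<Rightarrow> 'v) \<Rightarrow> ('v \<Rightarrow> 'v) \<Rightarrow> 'v set \<Rightarrow> bool" where
  "free_monogenous scale u W \<longleftrightarrow>
     (\<exists>y. W = orbit_span scale u y \<and> inj (\<lambda>k. (u ^^ k) y)
          \<and> \<not> module.dependent scale (range (\<lambda>k. (u ^^ k) y)))"

end

theory Submission imports Defs begin
context vector_space begin
lemma in_span_fin: "x \<in> span S \<Longrightarrow> \<exists>F. finite F \<and> F \<subseteq> S \<and> x \<in> span F"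
proof -
  assume "x \<in> span S"
  then obtain t r where t: "finite t" "t \<subseteq> S" "x = (\<Sum>a\<in>t. r a *s a)"
    unfolding span_explicit by blast
  have "x \<in> span t" unfolding t(3) by (intro span_sum span_scale span_base)
  with t show ?thesis by blast
qed

lemma indep_countable:
  assumes B: "countable B" "span B = UNIV" and T: "independent T"
  shows "countable T"
proof -
  have "T \<subseteq> (\<Union>F\<in>{F. finite F \<and> F \<subseteq> B}. T \<inter> span F)"
  proof
    fix t assume "t \<in> T"
    have "t \<in> span B" using B(2) by simp
    then obtain F where "finite F" "F \<subseteq> B" "t \<in> span F" using in_span_fin by blast
    then show "t \<in> (\<Union>F\<in>{F. finite F \<and> F \<subseteq> B}. T \<inter> span F)" using \<open>t \<in> T\<close> by blast
  qed
  moreover have "countable (\<Union>F\<in>{F. finite F \<and> F \<subseteq> B}. T \<inter> span F)"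
  proof (rule countable_UN)
    show "countable {F. finite F \<and> F \<subseteq> B}" using B(1) by (rule countable_Collect_finite_subset)
    fix F assume "F \<in> {F. finite F \<and> F \<subseteq> B}"
    then have "finite (T \<inter> span F)"
      using independent_span_bound[of F "T \<inter> span F"] independent_mono[OF T] by auto
    then show "countable (T \<inter> span F)" by (rule countable_finite)
  qed
  ultimately show ?thesis by (rule countable_subset)
qed
end


lemma finite_in_range_prefix:
  assumes "finite F" "F \<subseteq> range e" shows "\<exists>N. F \<subseteq> e ` {..<(N::nat)}"
  using assms
proof (induction F rule: finite_induct)
  case empty then show ?case by auto
next
  case (insert a F)
  then obtain N where N: "F \<subseteq> e ` {..<N}" by auto
  from insert obtain k where k: "a = e k" by auto
  have "insert a F \<subseteq> e ` {..<max N (Suc k)}" using N k by auto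
  then show ?case by blast
qed

lemma orbit_indep:
  fixes scale :: "'f::field \<Rightarrow> 'v::ab_group_add \<Rightarrow> 'v"
  assumes vs: "vector_space scale" and lin: "Vector_Spaces.linear scale scale u"
    and injy: "inj (\<lambda>k. (u ^^ k) y)"
    and indy: "\<not> module.dependent scale (range (\<lambda>k. (u ^^ k) y))"
    and sub: "range (\<lambda>k. (u ^^ k) y) \<subseteq> module.span scale (range (\<lambda>k. (u ^^ k) x))"
  shows "inj (\<lambda>k. (u ^^ k) x) \<and> \<not> module.dependent scale (range (\<lambda>k. (u ^^ k) x))"
proof -
  interpret vs: vector_space scale by (rule vs)
  interpret vp: vector_space_pair scale scale by unfold_locales
  define e where "e k = (u ^^ k) x" for k
  have eS: "e (Suc k) = u (e k)" for k by (simp add: e_def)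
  have key: "e n \<notin> vs.span (e ` {..<n})" for n
  proof
    assume en: "e n \<in> vs.span (e ` {..<n})"
    let ?F = "vs.span (e ` {..<n})"
    have uF: "u ` ?F \<subseteq> ?F"
    proof -
      have "u ` ?F = vs.span (u ` e ` {..<n})" using vp.linear_span_image[OF lin] by simp
      also have "\<dots> \<subseteq> ?F"
      proof (rule vs.span_minimal)
        show "u ` e ` {..<n} \<subseteq> ?F"
        proof
          fix z assume "z \<in> u ` e ` {..<n}"
          then obtain j where j: "j < n" "z = e (Suc j)" using eS by auto
          show "z \<in> ?F"
          proof (cases "Suc j = n")
            case True then show ?thesis using j en by simp
          next
            case False then show ?thesis using j by (intro vs.span_base) auto
          qed
        qed
      qed simp
      finally show ?thesis .
    qed
    have "e k \<in> ?F" for k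
    proof (induction k)
      case 0 then show ?case
        using en by (cases n) (auto intro: vs.span_base)
    next
      case (Suc k) then show ?case using uF eS by auto
    qed
    then have "vs.span (range e) \<subseteq> ?F"
      by (intro vs.span_minimal) auto
    then have "range (\<lambda>k. (u ^^ k) y) \<subseteq> ?F" using sub unfolding e_def by auto
    then have "finite (range (\<lambda>k. (u ^^ k) y))"
      using vs.independent_span_bound[of "e ` {..<n}"] indy by auto
    then show False using injy by (simp add: finite_image_iff)
  qed
  have inj: "inj e"
  proof (rule injI)
    fix i j assume eq: "e i = e j"
    show "i = j"
    proof (rule ccontr)
      assume "i \<noteq> j"
      then consider "i < j" | "j < i" by linarith
      then show False
      proof cases
        case 1 then have "e j \<in> vs.span (e ` {..<j})" using eq by (intro vs.span_base) (metis imageI lessThan_iff)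
        with key show False by blast
      next
        case 2 then have "e i \<in> vs.span (e ` {..<i})" using eq by (intro vs.span_base) (metis imageI lessThan_iff)
        with key show False by blast
      qed
    qed
  qed
  have indn: "vs.independent (e ` {..<n})" for n
  proof (induction n)
    case 0 then show ?case by (simp add: vs.independent_empty)
  next
    case (Suc n)
    have "e ` {..<Suc n} = insert (e n) (e ` {..<n})" by (auto simp: lessThan_Suc)
    then show ?case using vs.independent_insertI[OF key Suc] by simp
  qed
  have "vs.independent (range e)"
  proof
    assume "vs.dependent (range e)"
    then obtain a where a: "a \<in> range e" "a \<in> vs.span (range e - {a})"
      unfolding vs.dependent_def by blast
    obtain F where F: "finite F" "F \<subseteq> range e - {a}" "a \<in> vs.span F"
      using vs.in_span_fin[OF a(2)] by blast
    obtain N where N: "insert a F \<subseteq> e ` {..<N}"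
      using finite_in_range_prefix[of "insert a F" e] F a by auto
    have "a \<in> vs.span (e ` {..<N} - {a})"
      using F N vs.span_mono[of F "e ` {..<N} - {a}"] by auto
    then have "vs.dependent (e ` {..<N})" using N unfolding vs.dependent_def by blast
    with indn show False by blast
  qed
  then show ?thesis using inj unfolding e_def by simp
qed

lemma indep_union:
  fixes scale :: "'f::field \<Rightarrow> 'v::ab_group_add \<Rightarrow> 'v"
  assumes vs: "vector_space scale"
    and iA: "\<not> module.dependent scale A" and iB: "\<not> module.dependent scale B"
    and s1: "module.subspace scale V1" and s2: "module.subspace scale V2"
    and A: "A \<subseteq> V1" and B: "B \<subseteq> V2" and d: "V1 \<inter> V2 = {0}"
  shows "\<not> module.dependent scale (A \<union> B)"
proof
  interpret vs: vector_space scale by (rule vs)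
  have spA: "vs.span A \<subseteq> V1" using A s1 by (rule vs.span_minimal)
  have spB: "vs.span B \<subseteq> V2" using B s2 by (rule vs.span_minimal)
  have "0 \<notin> A" using iA vs.dependent_zero by blast
  have "0 \<notin> B" using iB vs.dependent_zero by blast
  have AB: "A \<inter> B = {}"
  proof (rule ccontr)
    assume "A \<inter> B \<noteq> {}"
    then obtain z where z: "z \<in> A" "z \<in> B" by blast
    then have "z \<in> V1 \<inter> V2" using A B by blast
    then have "z = 0" using d by blast
    then show False using z \<open>0 \<notin> A\<close> by simp
  qed
  assume "vs.dependent (A \<union> B)"
  then obtain a where a: "a \<in> A \<union> B" "a \<in> vs.span (A \<union> B - {a})"
    unfolding vs.dependent_def by blast
  show False
  proof (cases "a \<in> A")
    case True
    then have "A \<union> B - {a} = (A - {a}) \<union> B" using AB by blast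
    with a have "a \<in> {p + q | p q. p \<in> vs.span (A - {a}) \<and> q \<in> vs.span B}"
      by (simp add: vs.span_Un)
    then obtain p q where pq: "a = p + q" "p \<in> vs.span (A - {a})" "q \<in> vs.span B"
      by blast
    have "q = a - p" using pq by (simp add: algebra_simps)
    moreover have "a - p \<in> vs.span A"
      using vs.span_diff[OF vs.span_base[OF True], of p] pq(2) vs.span_mono[of "A - {a}" A] by auto
    ultimately have "q \<in> vs.span A" by simp
    then have "q \<in> V1 \<inter> V2" using pq(3) spA spB by blast
    then have "q = 0" using d by blast
    then have "a \<in> vs.span (A - {a})" using pq by simp
    then show False using iA True unfolding vs.dependent_def by blast
  next
    case False
    then have aB: "a \<in> B" using a by blast
    then have "A \<union> B - {a} = A \<union> (B - {a})" using AB by blast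
    with a have "a \<in> {p + q | p q. p \<in> vs.span A \<and> q \<in> vs.span (B - {a})}"
      by (simp add: vs.span_Un)
    then obtain p q where pq: "a = p + q" "p \<in> vs.span A" "q \<in> vs.span (B - {a})"
      by blast
    have "p = a - q" using pq by (simp add: algebra_simps)
    moreover have "a - q \<in> vs.span B"
      using vs.span_diff[OF vs.span_base[OF aB], of q] pq(3) vs.span_mono[of "B - {a}" B] by auto
    ultimately have "p \<in> vs.span B" by simp
    then have "p \<in> V1 \<inter> V2" using pq(2) spA spB by blast
    then have "p = 0" using d by blast
    then have "a \<in> vs.span (B - {a})" using pq by simp
    then show False using iB aB unfolding vs.dependent_def by blast
  qed
qed


theorem lemma9:
  fixes scale :: "'f::field \<Rightarrow> 'v::ab_group_add \<Rightarrow> 'v"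
    and u :: "'v \<Rightarrow> 'v" and V1 V2 :: "'v set" and x :: 'v and a :: 'f
  assumes vs: "vector_space scale"
    and dim: "\<exists>B. \<not> module.dependent scale B \<and> module.span scale B = UNIV
                  \<and> countable B \<and> infinite B"
    and u_lin: "Vector_Spaces.linear scale scale u"
    and sub1: "module.subspace scale V1" and sub2: "module.subspace scale V2"
    and inv1: "u ` V1 \<subseteq> V1" and inv2: "u ` V2 \<subseteq> V2"
    and dsum: "V1 \<inter> V2 = {0}" and dsum2: "{y + z | y z. y \<in> V1 \<and> z \<in> V2} = UNIV"
    and nz: "V1 \<noteq> {0}"
    and free: "free_monogenous scale u V1"
    and scalar: "\<exists>c. \<forall>z\<in>V2. u z = scale c z"
    and gen: "orbit_span scale u x = V1"
  shows "\<exists>v. Vector_Spaces.linear scale scale v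
             \<and> (\<forall>z. v (v z) = scale a (v z))
             \<and> orbit_span scale (\<lambda>z. u z - v z) x = UNIV"
proof -
  interpret vs: vector_space scale by (rule vs)
  interpret vp: vector_space_pair scale scale by unfold_locales
  obtain c where c: "\<And>z. z \<in> V2 \<Longrightarrow> u z = scale c z" using scalar by blast
  obtain y where y: "V1 = orbit_span scale u y" "inj (\<lambda>k. (u ^^ k) y)"
      "\<not> vs.dependent (range (\<lambda>k. (u ^^ k) y))"
    using free unfolding free_monogenous_def by blast
  obtain B0 where B0: "vs.span B0 = UNIV" "countable B0" using dim by blast
  define e where "e k = (u ^^ k) x" for k
  have eS: "u (e k) = e (Suc k)" for k by (simp add: e_def)
  have spanE: "vs.span (range e) = V1" using gen unfolding orbit_span_def e_def by simp
  have "range (\<lambda>k. (u ^^ k) y) \<subseteq> vs.span (range (\<lambda>k. (u ^^ k) y))" by (rule vs.span_superset)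
  then have "range (\<lambda>k. (u ^^ k) y) \<subseteq> vs.span (range (\<lambda>k. (u ^^ k) x))"
    using y(1) gen unfolding orbit_span_def by simp
  from orbit_indep[OF vs u_lin y(2) y(3) this]
  have einj: "inj e" and eind: "\<not> vs.dependent (range e)" unfolding e_def by auto
  have eV1: "range e \<subseteq> V1" using spanE vs.span_superset by blast
  obtain C2 where C2: "C2 \<subseteq> V2" "\<not> vs.dependent C2" "V2 \<subseteq> vs.span C2"
  proof -
    obtain C where "C \<subseteq> V2" "vs.independent C" "V2 \<subseteq> vs.span C" "card C = vs.dim V2"
      by (rule vs.basis_exists)
    then show ?thesis using that by simp
  qed
  have spC2: "vs.span C2 = V2"
    using C2 sub2 vs.span_minimal[of C2 V2] by auto
  have cC2: "countable C2" using vs.indep_countable[OF B0(2) B0(1) C2(2)] .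
  define idx where "idx = to_nat_on C2"
  define hs where "hs m \<longleftrightarrow> m \<in> idx ` C2" for m
  define f where "f m = from_nat_into C2 m" for m
  have f_idx: "f (idx z) = z" if "z \<in> C2" for z
    using that cC2 unfolding f_def idx_def by simp
  have hs_f: "f m \<in> C2 \<and> idx (f m) = m" if "hs m" for m
    using that f_idx unfolding hs_def by auto
  have hs_idx: "hs (idx z)" if "z \<in> C2" for z using that unfolding hs_def by auto
  define S where "S = range e \<union> C2"
  have Sind: "\<not> vs.dependent S"
    unfolding S_def using indep_union[OF vs eind C2(2) sub1 sub2 eV1 C2(1) dsum] .
  have Sspan: "vs.span S = UNIV"
    unfolding S_def vs.span_Un spanE spC2 using dsum2 by simp
  have eC2: "e k \<notin> C2" for k
  proof
    assume "e k \<in> C2"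
    then have "e k \<in> V1 \<inter> V2" using eV1 C2(1) by auto
    then have "e k = 0" using dsum by blast
    then show False using eind vs.dependent_zero[of "range e"] by (metis rangeI)
  qed
  define g where "g z = (if z \<in> C2 then z - e (Suc (2 * idx z))
       else (let k = inv e z; m = k div 2 in
         if hs m then (if even k then e (Suc k) - f m else scale (1 - a) (f m - e k)) else 0))" for z
  define v where "v = vp.construct S g"
  have vlin: "Vector_Spaces.linear scale scale v"
    unfolding v_def using vp.linear_construct Sind by blast
  have vS: "v b = g b" if "b \<in> S" for b
    unfolding v_def using vp.construct_basis Sind that by blast
  have ve: "v (e k) = (let m = k div 2 in
         if hs m then (if even k then e (Suc k) - f m else scale (1 - a) (f m - e k)) else 0)" for k
    using vS[of "e k"] eC2[of k] einj unfolding S_def g_def by (simp add: inv_f_f)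
  have vc: "v z = z - e (Suc (2 * idx z))" if "z \<in> C2" for z
    using vS[of z] that unfolding S_def g_def by simp
  have ve0: "v (e (2 * m)) = e (Suc (2 * m)) - f m" if "hs m" for m
    using ve[of "2*m"] that by simp
  have ve1: "v (e (Suc (2 * m))) = scale (1 - a) (f m - e (Suc (2 * m)))" if "hs m" for m
    using ve[of "Suc (2*m)"] that by simp
  have vf: "v (f m) = f m - e (Suc (2 * m))" if "hs m" for m
    using vc[of "f m"] hs_f[OF that] by simp
  have ve0n: "v (e (2 * m)) = 0" if "\<not> hs m" for m
    using ve[of "2*m"] that by simp
  have ve1n: "v (e (Suc (2 * m))) = 0" if "\<not> hs m" for m
    using ve[of "Suc (2*m)"] that by simp
  have vw: "v (f m - e (Suc (2 * m))) = scale a (f m - e (Suc (2 * m)))" if "hs m" for m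
  proof -
    let ?w = "f m - e (Suc (2 * m))"
    have "v ?w = ?w - scale (1 - a) ?w"
      using vp.linear_diff[OF vlin] vf[OF that] ve1[OF that] by simp
    also have "\<dots> = scale a ?w" by (simp add: vs.scale_left_diff_distrib)
    finally show ?thesis .
  qed
  have quadS: "v (v b) = scale a (v b)" if "b \<in> S" for b
  proof -
    have "b \<in> range e \<or> b \<in> C2" using that unfolding S_def by blast
    then show ?thesis
    proof
      assume "b \<in> range e"
      then obtain k where k: "b = e k" by blast
      obtain m where m: "k = 2 * m \<or> k = Suc (2 * m)"
      proof -
        have "k = 2 * (k div 2) \<or> k = Suc (2 * (k div 2))" by presburger
        then show ?thesis using that by blast
      qed
      show ?thesis
      proof (cases "hs m")
        case True
        show ?thesis using m
        proof
          assume "k = 2 * m"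
          then have "v b = - (f m - e (Suc (2 * m)))" using k ve0[OF True] by simp
          then have "v (v b) = - v (f m - e (Suc (2 * m)))" using vp.linear_neg[OF vlin, of "f m - e (Suc (2 * m))"] by simp
          also have "\<dots> = scale a (v b)" using vw[OF True] \<open>v b = _\<close> by (simp add: vs.scale_right_diff_distrib)
          finally show ?thesis .
        next
          assume "k = Suc (2 * m)"
          then have "v b = scale (1 - a) (f m - e (Suc (2 * m)))" using k ve1[OF True] by simp
          then show ?thesis using vp.linear_scale[OF vlin] vw[OF True] by (simp add: mult.commute)
        qed
      next
        case False
        then have "v b = 0" using m k ve0n ve1n by auto
        then show ?thesis using vp.linear_0[OF vlin] by simp
      qed
    next
      assume b: "b \<in> C2"
      then have "hs (idx b)" "f (idx b) = b" using hs_idx f_idx by auto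
      then show ?thesis using vf vw by metis
    qed
  qed
  have quad: "\<forall>z. v (v z) = scale a (v z)"
  proof
    fix z
    show "v (v z) = scale a (v z)"
    proof (rule vp.linear_eq_on[where B = S and f = "\<lambda>z. v (v z)" and g = "\<lambda>z. scale a (v z)"])
      show "Vector_Spaces.linear scale scale (\<lambda>z. v (v z))"
        using Vector_Spaces.linear_compose[OF vlin vlin] by (simp add: comp_def)
      have sl: "Vector_Spaces.linear scale scale (\<lambda>z. scale a z)"
        using vs.module_hom_scale_self module_hom_iff_linear by blast
      show "Vector_Spaces.linear scale scale (\<lambda>z. scale a (v z))"
        using Vector_Spaces.linear_compose[OF vlin sl] by (simp add: comp_def)
      show "z \<in> vs.span S" using Sspan by simp
    qed (rule quadS)
  qed
  define u' where "u' z = u z - v z" for z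
  have u'lin: "Vector_Spaces.linear scale scale u'"
    unfolding u'_def using vp.linear_compose_sub[OF u_lin vlin] by simp
  define Orb where "Orb = vs.span (range (\<lambda>k. (u' ^^ k) x))"
  have xO: "x \<in> Orb" unfolding Orb_def by (rule vs.span_base) (metis funpow_0 rangeI)
  have u'Orb: "u' z \<in> Orb" if "z \<in> Orb" for z
  proof -
    have "u' ` Orb = vs.span (u' ` range (\<lambda>k. (u' ^^ k) x))"
      unfolding Orb_def using vp.linear_span_image[OF u'lin] by simp
    also have "\<dots> \<subseteq> Orb"
    proof (unfold Orb_def, rule vs.span_mono)
      show "u' ` range (\<lambda>k. (u' ^^ k) x) \<subseteq> range (\<lambda>k. (u' ^^ k) x)"
      proof
        fix z assume "z \<in> u' ` range (\<lambda>k. (u' ^^ k) x)"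
        then obtain k where "z = (u' ^^ Suc k) x" by auto
        then show "z \<in> range (\<lambda>k. (u' ^^ k) x)" by blast
      qed
    qed
    finally show ?thesis using that by blast
  qed
  have Osub: "vs.subspace Orb" unfolding Orb_def by simp
  have Oadd: "p + q \<in> Orb" if "p \<in> Orb" "q \<in> Orb" for p q
    using that unfolding Orb_def by (rule vs.span_add)
  have Odiff: "p - q \<in> Orb" if "p \<in> Orb" "q \<in> Orb" for p q
    using that unfolding Orb_def by (rule vs.span_diff)
  have Oscale: "scale r p \<in> Orb" if "p \<in> Orb" for p r
    using that unfolding Orb_def by (rule vs.span_scale)
  have fV2: "f m \<in> V2" if "hs m" for m using hs_f[OF that] C2(1) by auto
  have u'e0: "u' (e (2 * m)) = f m" if "hs m" for m
    unfolding u'_def using ve0[OF that] eS[of "2*m"] by simp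
  have step: "e (2 * m) \<in> Orb \<Longrightarrow> e (Suc (2 * m)) \<in> Orb \<and> e (2 * Suc m) \<in> Orb \<and> (hs m \<longrightarrow> f m \<in> Orb)" for m
  proof -
    assume e0: "e (2 * m) \<in> Orb"
    show ?thesis
    proof (cases "hs m")
      case True
      have fO: "f m \<in> Orb" using u'Orb[OF e0] u'e0[OF True] by simp
      have "u' (f m) = scale c (f m) - (f m - e (Suc (2 * m)))"
        unfolding u'_def using c[OF fV2[OF True]] vf[OF True] by simp
      then have "e (Suc (2 * m)) = u' (f m) - scale c (f m) + f m" by (simp add: algebra_simps)
      moreover have "u' (f m) - scale c (f m) + f m \<in> Orb" using Oadd[OF Odiff[OF u'Orb[OF fO] Oscale[OF fO]] fO] .
      ultimately have e1O: "e (Suc (2 * m)) \<in> Orb" by simp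
      have "u' (e (Suc (2 * m))) = e (2 * Suc m) - scale (1 - a) (f m - e (Suc (2 * m)))"
        unfolding u'_def using ve1[OF True] eS[of "Suc (2*m)"] by simp
      then have "e (2 * Suc m) = u' (e (Suc (2 * m))) + scale (1 - a) (f m - e (Suc (2 * m)))"
        by (simp add: algebra_simps)
      moreover have "u' (e (Suc (2 * m))) + scale (1 - a) (f m - e (Suc (2 * m))) \<in> Orb"
        using Oadd[OF u'Orb[OF e1O] Oscale[OF Odiff[OF fO e1O]]] .
      ultimately have "e (2 * Suc m) \<in> Orb" by simp
      then show ?thesis using fO e1O by simp
    next
      case False
      have e1O: "e (Suc (2 * m)) \<in> Orb"
        using u'Orb[OF e0] ve0n[OF False] eS[of "2*m"] unfolding u'_def by simp
      have "e (2 * Suc m) \<in> Orb"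
        using u'Orb[OF e1O] ve1n[OF False] eS[of "Suc (2*m)"] unfolding u'_def by simp
      then show ?thesis using e1O False by simp
    qed
  qed
  have evenO: "e (2 * m) \<in> Orb" for m
  proof (induction m)
    case 0 then show ?case using xO by (simp add: e_def)
  next
    case (Suc m) then show ?case using step by blast
  qed
  have SO: "S \<subseteq> Orb"
  proof
    fix b assume "b \<in> S"
    then have "b \<in> range e \<or> b \<in> C2" unfolding S_def by blast
    then show "b \<in> Orb"
    proof
      assume "b \<in> range e"
      then obtain k where k: "b = e k" by blast
      obtain m where m: "k = 2 * m \<or> k = Suc (2 * m)"
      proof -
        have "k = 2 * (k div 2) \<or> k = Suc (2 * (k div 2))" by presburger
        then show ?thesis using that by blast
      qed
      then show ?thesis using k evenO step by blast
    next
      assume b: "b \<in> C2"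
      then have "hs (idx b)" "f (idx b) = b" using hs_idx f_idx by auto
      then show ?thesis using step[OF evenO[of "idx b"]] by simp
    qed
  qed
  have "Orb = UNIV" using vs.span_minimal[OF SO Osub] Sspan by auto
  then have "orbit_span scale (\<lambda>z. u z - v z) x = UNIV"
    unfolding orbit_span_def Orb_def u'_def[abs_def] by simp
  then show ?thesis using vlin quad by blast
qed

end
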